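(* For any sum-indecomposable permutation $\sigma$, the class $\mathrm{St}(\mathrm{Inc},\mathrm{Av}(\sigma))$ is a subclass of $\mathrm{Av}(1\ominus\sigma)$.
   Context: $\mathrm{Av}(\sigma)$ is the class of permutations not containing $\sigma$; $\mathrm{Inc}=\mathrm{Av}(21)$ is the class of increasing permutations. $\pi\oplus\sigma$ is the permutation whose diagram is a copy of $\pi$ with a copy of $\sigma$ placed above and to the right; $\pi\ominus\sigma$ has a copy of $\sigma$ placed below and to the right of a copy of $\pi$. $\sigma$ is sum-indecomposable if it is not a direct sum of two shorter permutations. Grid classes: for a $k\times\ell$ matrix $\mathcal{M}$ of permutation classes ($k$ columns, $\ell$ rows, $\mathcal{M}_{i,j}$ in column $i$, row $j$, rows numbered bottom to top), a permutation $\pi$ of length $n$ is in $\mathrm{Grid}(\mathcal{M})$ if there are $1=c_1\le\dots\le c_{k+1}=n+1$, $1=r_1\le\dots\le r_{\ell+1}=n+1$ such that for each $i,j$ the points $(x,\pi_x)$ with $c_i\le x<c_{i+1}$, $r_j\le\pi_x<r_{j+1}$ form a pattern in $\mathcal{M}_{i,j}$. For classes $\mathcal{C},\mathcal{D}$, $\mathrm{St}_k(\mathcal{C},\mathcal{D})=\mathrm{Grid}(\mathcal{M})$ where $\mathcal{M}$ is the matrix with $k$ columns and $k+1$ rows whose only nonempty entries are $\mathcal{M}_{i,i+1}=\mathcal{C}$ and $\mathcal{M}_{i,i}=\mathcal{D}$ for $i\in[k]$ (so in each column the $\mathcal{C}$-cell lies directly above the $\mathcal{D}$-cell), and $\mathrm{St}(\mathcal{C},\mathcal{D})=\bigcup_{k\ge1}\mathrm{St}_k(\mathcal{C},\mathcal{D})$.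 *)

theory Defs
  imports Main
begin

text \<open>Permutations of length n are lists that are arrangements of 0,...,n-1
  (0-based values; position x has value p!x).\<close>

definition is_perm :: "nat list \<Rightarrow> bool" where
  "is_perm p \<longleftrightarrow> distinct p \<and> set p = {0..<length p}"

definition order_iso :: "nat list \<Rightarrow> nat list \<Rightarrow> bool" where
  "order_iso xs ys \<longleftrightarrow> length xs = length ys \<and>
     (\<forall>i<length xs. \<forall>j<length xs. (xs!i < xs!j) = (ys!i < ys!j))"

definition contains :: "nat list \<Rightarrow> nat list \<Rightarrow> bool" where
  "contains pi sigma \<longleftrightarrow> (\<exists>idx. sorted_wrt (<) idx \<and> length idx = length sigma \<and>
      (\<forall>x\<in>set idx. x < length pi) \<and> order_iso (map (\<lambda>x. pi!x) idx) sigma)"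

definition Av :: "nat list \<Rightarrow> nat list set" where
  "Av sigma = {pi. is_perm pi \<and> \<not> contains pi sigma}"

definition Inc :: "nat list set" where
  "Inc = Av [1, 0]"

definition direct_sum :: "nat list \<Rightarrow> nat list \<Rightarrow> nat list" where
  "direct_sum a b = a @ map (\<lambda>x. x + length a) b"

definition skew_sum :: "nat list \<Rightarrow> nat list \<Rightarrow> nat list" where
  "skew_sum a b = map (\<lambda>x. x + length b) a @ b"

definition sum_indecomposable :: "nat list \<Rightarrow> bool" where
  "sum_indecomposable s \<longleftrightarrow> is_perm s \<and> s \<noteq> [] \<and>
     \<not> (\<exists>a b. is_perm a \<and> is_perm b \<and> a \<noteq> [] \<and> b \<noteq> [] \<and> s = direct_sum a b)"

definition pattern_in :: "nat list set \<Rightarrow> nat list \<Rightarrow> bool" where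
  "pattern_in C xs \<longleftrightarrow> (\<exists>t\<in>C. order_iso xs t)"

definition cell_seq :: "nat list \<Rightarrow> (nat \<Rightarrow> nat) \<Rightarrow> (nat \<Rightarrow> nat) \<Rightarrow> nat \<Rightarrow> nat \<Rightarrow> nat list" where
  "cell_seq pi c r i j = map (\<lambda>x. pi!x)
     (filter (\<lambda>x. c i \<le> x \<and> x < c (Suc i) \<and> r j \<le> pi!x \<and> pi!x < r (Suc j)) [0..<length pi])"

text \<open>Grid class of a k-column, l-row matrix M (M i j = entry in column i, row j,
  0-based, rows bottom to top). An empty cell imposes no condition (the empty
  pattern belongs to every class, including the empty entry {}).\<close>
definition Grid :: "nat \<Rightarrow> nat \<Rightarrow> (nat \<Rightarrow> nat \<Rightarrow> nat list set) \<Rightarrow> nat list set" where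
  "Grid k l M = {pi. is_perm pi \<and> (\<exists>c r.
      c 0 = 0 \<and> c k = length pi \<and> (\<forall>i<k. c i \<le> c (Suc i)) \<and>
      r 0 = 0 \<and> r l = length pi \<and> (\<forall>j<l. r j \<le> r (Suc j)) \<and>
      (\<forall>i<k. \<forall>j<l. cell_seq pi c r i j = [] \<or> pattern_in (M i j) (cell_seq pi c r i j)))}"

definition St_k :: "nat \<Rightarrow> nat list set \<Rightarrow> nat list set \<Rightarrow> nat list set" where
  "St_k k C D = Grid k (Suc k) (\<lambda>i j. if j = Suc i then C else if j = i then D else {})"

definition St :: "nat list set \<Rightarrow> nat list set \<Rightarrow> nat list set" where
  "St C D = (\<Union>k\<in>{1..}. St_k k C D)"

end

theory Submission
  imports Defs
begin

lemma sub_of_sorted: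
  fixes L ys :: "nat list"
  assumes "sorted_wrt (<) L" "sorted_wrt (<) ys" "set ys \<subseteq> set L"
  shows "\<exists>zs. sorted_wrt (<) zs \<and> length zs = length ys \<and> (\<forall>z\<in>set zs. z < length L) \<and> map (\<lambda>z. L!z) zs = ys"
  using assms
proof (induction L arbitrary: ys)
  case Nil
  then show ?case by auto
next
  case (Cons a L)
  show ?case
  proof (cases ys)
    case Nil then show ?thesis by auto
  next
    case (Cons y ys')
    show ?thesis
    proof (cases "y = a")
      case True
      have "set ys' \<subseteq> set L"
      proof
        fix x assume "x \<in> set ys'"
        then have "a < x" "x \<in> set (a # L)" using Cons.prems \<open>ys = y # ys'\<close> True by auto
        then show "x \<in> set L" using less_irrefl set_ConsD by metis
      qed
      then obtain zs where zs: "sorted_wrt (<) zs" "length zs = length ys'" "\<forall>z\<in>set zs. z < length L" "map (\<lambda>z. L!z) zs = ys'"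
        using Cons.IH[of ys'] Cons.prems \<open>ys = y # ys'\<close> by auto
      show ?thesis
        apply (rule exI[of _ "0 # map Suc zs"])
        using zs \<open>ys = y # ys'\<close> True by (auto simp: sorted_wrt_map)
    next
      case False
      have ay: "a < y" using Cons.prems \<open>ys = y # ys'\<close> False by auto
      have "set ys \<subseteq> set L" using Cons.prems \<open>ys = y # ys'\<close> False ay by fastforce
      then obtain zs where zs: "sorted_wrt (<) zs" "length zs = length ys" "\<forall>z\<in>set zs. z < length L" "map (\<lambda>z. L!z) zs = ys"
        using Cons.IH[of ys] Cons.prems by auto
      show ?thesis
        apply (rule exI[of _ "map Suc zs"])
        using zs by (auto simp: sorted_wrt_map)
    qed
  qed
qed

lemma order_iso_trans: "order_iso a b \<Longrightarrow> order_iso b c \<Longrightarrow> order_iso a c"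
  by (simp add: order_iso_def)

lemma order_iso_sym: "order_iso a b \<Longrightarrow> order_iso b a"
  by (simp add: order_iso_def)

lemma order_iso_map: "order_iso xs t \<Longrightarrow> \<forall>z\<in>set zs. z < length xs \<Longrightarrow>
   order_iso (map (\<lambda>z. xs!z) zs) (map (\<lambda>z. t!z) zs)"
  by (simp add: order_iso_def)

lemma lemB:
  assumes "pattern_in (Av \<sigma>) xs" "sorted_wrt (<) zs" "length zs = length \<sigma>"
    "\<forall>z\<in>set zs. z < length xs" "order_iso (map (\<lambda>z. xs!z) zs) \<sigma>"
  shows False
proof -
  obtain t where t: "t \<in> Av \<sigma>" "order_iso xs t" using assms(1) pattern_in_def by blast
  have "order_iso (map (\<lambda>z. t!z) zs) \<sigma>"
    using order_iso_trans[OF order_iso_sym[OF order_iso_map[OF t(2) assms(4)]] assms(5)] .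
  moreover have "\<forall>z\<in>set zs. z < length t" using t(2) assms(4) by (simp add: order_iso_def)
  ultimately have "contains t \<sigma>" unfolding contains_def using assms(2,3) by blast
  then show False using t(1) by (simp add: Av_def)
qed

lemma lemC:
  assumes "pattern_in Inc xs" "a < b" "b < length xs" "xs!b < xs!a"
  shows False
proof -
  obtain t where t: "t \<in> Inc" "order_iso xs t" using assms(1) pattern_in_def by blast
  have lt: "length t = length xs" using t(2) by (simp add: order_iso_def)
  have "t!b < t!a" using t(2) assms unfolding order_iso_def by auto
  then have "order_iso (map (\<lambda>z. t!z) [a,b]) [1,0]"
    by (auto simp: order_iso_def less_Suc_eq nth_Cons')
  then have "contains t [1,0]" unfolding contains_def using assms lt
    by (intro exI[of _ "[a,b]"]) auto
  then show False using t(1) by (simp add: Inc_def Av_def)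
qed

lemma dc:
  fixes A :: "nat set"
  assumes "finite A" "\<And>a a'. a \<in> A \<Longrightarrow> a' < a \<Longrightarrow> a' \<in> A"
  shows "A = {0..<card A}"
proof -
  have "A \<subseteq> {0..<card A}"
  proof
    fix a assume a: "a \<in> A"
    show "a \<in> {0..<card A}"
    proof (rule ccontr)
      assume "a \<notin> {0..<card A}"
      then have "card A \<le> a" by auto
      have "{0..a} \<subseteq> A" using a assms(2) by (auto simp: le_less)
      then have "card {0..a} \<le> card A" using assms(1) card_mono by blast
      then show False using \<open>card A \<le> a\<close> by simp
    qed
  qed
  then show ?thesis using card_subset_eq[of "{0..<card A}" A] by auto
qed

lemma colex:
  fixes c :: "nat \<Rightarrow> nat"
  assumes "c 0 = 0" "x < c k"
  shows "\<exists>i<k. c i \<le> x \<and> x < c (Suc i)"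
  using assms(2)
proof (induction k)
  case 0 then show ?case using assms(1) by simp
next
  case (Suc k)
  show ?case
  proof (cases "x < c k")
    case True then show ?thesis using Suc.IH by (meson less_SucI)
  next
    case False then show ?thesis using Suc.prems by auto
  qed
qed

lemma cmono:
  fixes c :: "nat \<Rightarrow> nat"
  assumes "\<forall>i<k. c i \<le> c (Suc i)" "a \<le> b" "b \<le> k"
  shows "c a \<le> c b"
  using assms(2,3)
proof (induction b)
  case 0 then show ?case by simp
next
  case (Suc b)
  show ?case
  proof (cases "a = Suc b")
    case True then show ?thesis by simp
  next
    case False
    then have "c a \<le> c b" using Suc by simp
    also have "\<dots> \<le> c (Suc b)" using assms(1) Suc.prems by simp
    finally show ?thesis .
  qed
qed

lemma split_perm:
  assumes si: "sum_indecomposable s"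
    and lt: "\<And>a b. a < length s \<Longrightarrow> b < length s \<Longrightarrow> P a \<Longrightarrow> \<not> P b \<Longrightarrow> s!a < s!b"
    and dw: "\<And>a b. a < b \<Longrightarrow> b < length s \<Longrightarrow> P b \<Longrightarrow> P a"
  shows "(\<forall>a<length s. P a) \<or> (\<forall>a<length s. \<not> P a)"
proof (rule ccontr)
  assume nt: "\<not> ?thesis"
  have ps: "is_perm s" using si by (simp add: sum_indecomposable_def)
  define n where "n = length s"
  define A where "A = {a. a < n \<and> P a}"
  define m where "m = card A"
  have A: "A = {0..<m}" unfolding m_def
    by (rule dc) (auto simp: A_def n_def intro: dw)
  have mn: "m \<le> n"
  proof -
    have "A \<subseteq> {0..<n}" unfolding A_def by auto
    then have "card A \<le> card {0..<n}" by (rule card_mono[rotated]) simp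
    then show ?thesis by (simp add: m_def)
  qed
  have Pm: "a < n \<Longrightarrow> P a \<longleftrightarrow> a < m" for a
  proof -
    assume "a < n"
    then have "P a \<longleftrightarrow> a \<in> A" unfolding A_def by simp
    also have "\<dots> \<longleftrightarrow> a < m" unfolding A by simp
    finally show "P a \<longleftrightarrow> a < m" .
  qed
  have "\<exists>a1. a1 < n \<and> P a1" using nt unfolding n_def by (simp only: de_Morgan_disj not_all not_imp not_not)
  then obtain a1 where a1: "a1 < n" "P a1" by blast
  have "\<exists>a2. a2 < n \<and> \<not> P a2" using nt unfolding n_def by (simp only: de_Morgan_disj not_all not_imp)
  then obtain a2 where a2: "a2 < n" "\<not> P a2" by blast
  have m0: "0 < m" using Pm[OF a1(1)] a1(2) by simp
  have m1: "m < n" using Pm[OF a2(1)] a2 by simp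
  have ab: "a < m \<Longrightarrow> m \<le> b \<Longrightarrow> b < n \<Longrightarrow> s!a < s!b" for a b
  proof -
    assume h: "a < m" "m \<le> b" "b < n"
    have "P a" using Pm[of a] h mn by simp
    moreover have "\<not> P b" using Pm[of b] h by simp
    ultimately show "s!a < s!b" using lt h mn n_def by simp
  qed
  have ds: "distinct s" and ss: "set s = {0..<n}" using ps by (auto simp: is_perm_def n_def)
  define V where "V = set (take m s)"
  have Vc: "card V = m" unfolding V_def using ds mn n_def by (simp add: distinct_card)
  have V: "V = {0..<m}"
  proof -
    have "V = {0..<card V}"
    proof (rule dc)
      show "finite V" by (simp add: V_def)
    next
      fix v v' assume v: "v \<in> V" and vv: "v' < v"
      obtain a where a: "a < m" "s!a = v" using v mn n_def unfolding V_def
        by (auto simp: in_set_conv_nth)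
      have "a < length s" using a mn n_def by simp
      then have "s!a \<in> set s" by (rule nth_mem)
      then have "v < n" using a ss by simp
      then have "v' \<in> set s" using vv ss by auto
      then obtain b where b: "b < n" "s!b = v'" by (auto simp: in_set_conv_nth n_def)
      have "b < m"
      proof (rule ccontr)
        assume "\<not> b < m"
        then have "s!a < s!b" using ab[OF a(1) _ b(1)] by simp
        then show False using a b vv by simp
      qed
      then show "v' \<in> V" unfolding V_def using b mn n_def by (auto simp: in_set_conv_nth)
    qed
    then show ?thesis using Vc by simp
  qed
  have sd: "set s = set (take m s) \<union> set (drop m s)"
    by (metis set_append append_take_drop_id)
  have disj: "set (take m s) \<inter> set (drop m s) = {}"
    using ds by (simp add: set_take_disj_set_drop_if_distinct)
  have D: "set (drop m s) = {m..<n}"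
  proof -
    have e1: "{0..<n} = {0..<m} \<union> set (drop m s)" "{0..<m} \<inter> set (drop m s) = {}"
      using sd disj ss V unfolding V_def by auto
    then have "set (drop m s) = {0..<n} - {0..<m}" by blast
    also have "\<dots> = {m..<n}" by auto
    finally show ?thesis .
  qed
  define a where "a = take m s"
  define b where "b = map (\<lambda>x. x - m) (drop m s)"
  have pa: "is_perm a" using V ds mn n_def unfolding a_def V_def is_perm_def by auto
  have inj: "inj_on (\<lambda>x. x - m) (set (drop m s))" using D by (auto simp: inj_on_def)
  have img: "(\<lambda>x. x - m) ` {m..<n} = {0..<n-m}"
  proof
    show "(\<lambda>x. x - m) ` {m..<n} \<subseteq> {0..<n-m}" by auto
  next
    show "{0..<n-m} \<subseteq> (\<lambda>x. x - m) ` {m..<n}"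
    proof
      fix y assume "y \<in> {0..<n-m}"
      then have "y + m \<in> {m..<n}" "y = (y + m) - m" by auto
      then show "y \<in> (\<lambda>x. x - m) ` {m..<n}" by blast
    qed
  qed
  have pb: "is_perm b" unfolding b_def is_perm_def using inj ds D img n_def
    by (simp add: distinct_map)
  have eq: "s = direct_sum a b"
  proof -
    have "map (\<lambda>x. x + m) b = drop m s" unfolding b_def map_map
      by (rule map_idI) (use D in auto)
    then show ?thesis unfolding direct_sum_def a_def using mn n_def by simp
  qed
  have "a \<noteq> []" "b \<noteq> []" using m0 m1 n_def unfolding a_def b_def by auto
  then show False using si pa pb eq unfolding sum_indecomposable_def by blast
qed

lemma core:
  fixes \<pi> :: "nat list" and c r :: "nat \<Rightarrow> nat"
  assumes perm: "is_perm \<pi>"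
  and c0: "c 0 = 0" and ck: "c k = length \<pi>" and cm: "\<forall>i<k. c i \<le> c (Suc i)"
  and r0: "r 0 = 0" and rk: "r (Suc k) = length \<pi>" and rm: "\<forall>j<Suc k. r j \<le> r (Suc j)"
  and cells: "\<forall>i<k. \<forall>j<Suc k. cell_seq \<pi> c r i j = [] \<or>
      pattern_in (if j = Suc i then Inc else if j = i then Av \<sigma> else {}) (cell_seq \<pi> c r i j)"
  and si: "sum_indecomposable \<sigma>"
  and x0: "x0 < length \<pi>"
  and yss: "sorted_wrt (<) ys" and ysl: "length ys = length \<sigma>"
  and ysp: "\<forall>y\<in>set ys. x0 < y \<and> y < length \<pi> \<and> \<pi>!y < \<pi>!x0"
  and iso: "order_iso (map (\<lambda>y. \<pi>!y) ys) \<sigma>"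
  shows False
proof -
  define inc where "inc x i j \<longleftrightarrow> c i \<le> x \<and> x < c (Suc i) \<and> r j \<le> \<pi>!x \<and> \<pi>!x < r (Suc j)" for x i j
  define L where "L i j = filter (\<lambda>x. inc x i j) [0..<length \<pi>]" for i j
  have cs: "cell_seq \<pi> c r i j = map (\<lambda>x. \<pi>!x) (L i j)" for i j
    by (simp add: cell_seq_def inc_def L_def)
  have Ls: "sorted_wrt (<) (L i j)" for i j unfolding L_def by (rule sorted_wrt_filter) simp
  have Lset: "x \<in> set (L i j) \<longleftrightarrow> x < length \<pi> \<and> inc x i j" for x i j unfolding L_def by auto
  have csnth: "z < length (L i j) \<Longrightarrow> cell_seq \<pi> c r i j ! z = \<pi>!(L i j ! z)" for z i j
    by (simp add: cs)
  have vals: "x < length \<pi> \<Longrightarrow> \<pi>!x < length \<pi>" for x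
    using perm unfolding is_perm_def by (metis atLeastLessThan_iff nth_mem)
  have colof: "x < length \<pi> \<Longrightarrow> \<exists>i<k. c i \<le> x \<and> x < c (Suc i)" for x
    using colex[of c x k] c0 ck by simp
  have rowof: "x < length \<pi> \<Longrightarrow> \<exists>j<Suc k. r j \<le> \<pi>!x \<and> \<pi>!x < r (Suc j)" for x
    using colex[of r "\<pi>!x" "Suc k"] r0 rk vals by simp
  have cellP: "pattern_in (if j = Suc i then Inc else if j = i then Av \<sigma> else {}) (cell_seq \<pi> c r i j)"
    if "i < k" "j < Suc k" "cell_seq \<pi> c r i j \<noteq> []" for i j
    using cells that by blast
  have cellok: "j = i \<or> j = Suc i" if "x < length \<pi>" "i < k" "j < Suc k" "inc x i j" for x i j
  proof (rule ccontr)
    assume nj: "\<not> (j = i \<or> j = Suc i)"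
    have "x \<in> set (L i j)" using that Lset by simp
    then have "cell_seq \<pi> c r i j \<noteq> []" by (auto simp: cs)
    then have "pattern_in {} (cell_seq \<pi> c r i j)" using cellP[OF that(2,3)] nj by simp
    then show False by (simp add: pattern_in_def)
  qed
  have sne: "\<sigma> \<noteq> []" and sp: "is_perm \<sigma>" using si by (auto simp: sum_indecomposable_def)
  have inD: False if allD: "\<forall>y\<in>set ys. inc y i i" and ik: "i < k" for i
  proof -
    have "set ys \<subseteq> set (L i i)" using allD ysp Lset by auto
    then obtain zs where zs: "sorted_wrt (<) zs" "length zs = length ys"
      "\<forall>z\<in>set zs. z < length (L i i)" "map (\<lambda>z. L i i!z) zs = ys"
      using sub_of_sorted[OF Ls yss] by blast
    have "zs \<noteq> []" using zs(2) ysl sne by auto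
    then have "length (L i i) > 0" using zs(3) by (cases zs) auto
    then have ne: "cell_seq \<pi> c r i i \<noteq> []" by (simp add: cs)
    have pat: "pattern_in (Av \<sigma>) (cell_seq \<pi> c r i i)" using cellP[OF ik _ ne] ik by simp
    have m: "map (\<lambda>z. cell_seq \<pi> c r i i ! z) zs = map (\<lambda>y. \<pi>!y) ys"
      using zs(3,4) csnth by (auto simp: cs)
    show False
      by (rule lemB[OF pat zs(1)]) (use zs(2,3) ysl m iso in \<open>auto simp: cs\<close>)
  qed
  have inC: False if ik: "i < k" and p: "inc x0 i (Suc i)" and y: "y \<in> set ys" "inc y i (Suc i)" for i y
  proof -
    have "x0 \<in> set (L i (Suc i))" "y \<in> set (L i (Suc i))" using p y x0 ysp Lset by auto
    then obtain a b where a: "a < length (L i (Suc i))" "L i (Suc i) ! a = x0"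
      and b: "b < length (L i (Suc i))" "L i (Suc i) ! b = y" by (metis in_set_conv_nth)
    have xy: "x0 < y" "\<pi>!y < \<pi>!x0" using ysp y by auto
    have "a < b"
    proof (rule ccontr)
      assume "\<not> a < b"
      then have "b = a \<or> b < a" by auto
      then show False
      proof
        assume "b = a" then show False using a b xy by simp
      next
        assume "b < a" then have "L i (Suc i) ! b < L i (Suc i) ! a"
          using Ls a(1) by (simp add: sorted_wrt_iff_nth_less)
        then show False using a b xy by simp
      qed
    qed
    have ne: "cell_seq \<pi> c r i (Suc i) \<noteq> []" using a by (auto simp: cs)
    have pat: "pattern_in Inc (cell_seq \<pi> c r i (Suc i))" using cellP[OF ik _ ne] ik by simp
    show False
      by (rule lemC[OF pat \<open>a < b\<close>]) (use a b xy csnth in \<open>auto simp: cs\<close>)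
  qed
  obtain i where i: "i < k" "c i \<le> x0" "x0 < c (Suc i)" using colof x0 by blast
  obtain j where j: "j < Suc k" "r j \<le> \<pi>!x0" "\<pi>!x0 < r (Suc j)" using rowof x0 by blast
  have ij: "j = i \<or> j = Suc i" using cellok[OF x0 i(1) j(1)] i j by (simp add: inc_def)
  have pos: "\<exists>i' j'. i' < k \<and> i \<le> i' \<and> j' \<le> j \<and> (j' = i' \<or> j' = Suc i') \<and> inc y i' j'"
    if y: "y \<in> set ys" for y
  proof -
    have yl: "y < length \<pi>" "x0 < y" "\<pi>!y < \<pi>!x0" using ysp y by auto
    obtain i' where i': "i' < k" "c i' \<le> y" "y < c (Suc i')" using colof yl by blast
    obtain j' where j': "j' < Suc k" "r j' \<le> \<pi>!y" "\<pi>!y < r (Suc j')" using rowof yl by blast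
    have "i \<le> i'"
    proof (rule ccontr)
      assume "\<not> i \<le> i'"
      then have "c (Suc i') \<le> c i" using cmono[OF cm, of "Suc i'" i] i by simp
      then show False using i' i yl by simp
    qed
    moreover have "j' \<le> j"
    proof (rule ccontr)
      assume "\<not> j' \<le> j"
      then have "r (Suc j) \<le> r j'" using cmono[OF rm, of "Suc j" j'] j' by simp
      then show False using j' j yl by simp
    qed
    moreover have "inc y i' j'" using i' j' by (simp add: inc_def)
    moreover have "j' = i' \<or> j' = Suc i'" using cellok[OF yl(1) i'(1) j'(1)] calculation by simp
    ultimately show ?thesis using i' by blast
  qed
  show False
  proof (cases "j = i")
    case True
    have "\<forall>y\<in>set ys. inc y i i"
    proof
      fix y assume y: "y \<in> set ys"
      obtain i' j' where "i' < k" "i \<le> i'" "j' \<le> j" "j' = i' \<or> j' = Suc i'" "inc y i' j'"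
        using pos[OF y] by blast
      then have "i' = i" "j' = i" using True by auto
      then show "inc y i i" using \<open>inc y i' j'\<close> by simp
    qed
    then show False using inD i(1) by blast
  next
    case False
    then have jS: "j = Suc i" using ij by simp
    have p: "inc x0 i (Suc i)" using i j jS by (simp add: inc_def)
    have two: "inc y i i \<or> (inc y (Suc i) (Suc i) \<and> Suc i < k)" if y: "y \<in> set ys" for y
    proof -
      obtain i' j' where h: "i' < k" "i \<le> i'" "j' \<le> j" "j' = i' \<or> j' = Suc i'" "inc y i' j'"
        using pos[OF y] by blast
      have "(i' = i \<and> j' = i) \<or> (i' = i \<and> j' = Suc i) \<or> (i' = Suc i \<and> j' = Suc i)"
        using h jS by auto
      moreover have "\<not> (i' = i \<and> j' = Suc i)" using inC[OF i(1) p y] h by auto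
      ultimately show ?thesis using h by auto
    qed
    define P where "P a \<longleftrightarrow> ys!a < c (Suc i)" for a
    have ysn: "a < length \<sigma> \<Longrightarrow> ys!a \<in> set ys" for a using ysl by simp
    have PD: "inc (ys!a) i i" if "a < length \<sigma>" "P a" for a
    proof -
      have "inc (ys!a) i i \<or> (inc (ys!a) (Suc i) (Suc i) \<and> Suc i < k)" using two[OF ysn[OF that(1)]] .
      then show ?thesis using that(2) by (auto simp: P_def inc_def)
    qed
    have PD2: "inc (ys!a) (Suc i) (Suc i) \<and> Suc i < k" if "a < length \<sigma>" "\<not> P a" for a
    proof -
      have "inc (ys!a) i i \<or> (inc (ys!a) (Suc i) (Suc i) \<and> Suc i < k)" using two[OF ysn[OF that(1)]] .
      then show ?thesis using that(2) by (auto simp: P_def inc_def)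
    qed
    have "(\<forall>a<length \<sigma>. P a) \<or> (\<forall>a<length \<sigma>. \<not> P a)"
    proof (rule split_perm[OF si])
      fix a b assume ab: "a < length \<sigma>" "b < length \<sigma>" "P a" "\<not> P b"
      have "\<pi>!(ys!a) < r (Suc i)" using PD[OF ab(1,3)] by (simp add: inc_def)
      moreover have "r (Suc i) \<le> \<pi>!(ys!b)" using PD2[OF ab(2,4)] by (simp add: inc_def)
      ultimately have "\<pi>!(ys!a) < \<pi>!(ys!b)" by simp
      then show "\<sigma>!a < \<sigma>!b" using iso ab(1,2) ysl unfolding order_iso_def by auto
    next
      fix a b assume ab: "a < b" "b < length \<sigma>" "P b"
      have "ys!a < ys!b" using yss ab ysl by (simp add: sorted_wrt_iff_nth_less)
      then show "P a" using ab(3) by (simp add: P_def)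
    qed
    then show False
    proof
      assume "\<forall>a<length \<sigma>. P a"
      then have "\<forall>y\<in>set ys. inc y i i" using PD ysl by (metis in_set_conv_nth)
      then show False using inD i(1) by blast
    next
      assume allN: "\<forall>a<length \<sigma>. \<not> P a"
      then have "\<forall>y\<in>set ys. inc y (Suc i) (Suc i)" using PD2 ysl by (metis in_set_conv_nth)
      moreover have "Suc i < k" using PD2[of 0] allN sne by auto
      ultimately show False using inD by blast
    qed
  qed
qed

theorem proposition11:
  assumes "sum_indecomposable \<sigma>"
  shows "St Inc (Av \<sigma>) \<subseteq> Av (skew_sum [0] \<sigma>)"
proof
  fix \<pi> assume "\<pi> \<in> St Inc (Av \<sigma>)"
  then obtain k where "\<pi> \<in> St_k k Inc (Av \<sigma>)" by (auto simp: St_def)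
  then have perm: "is_perm \<pi>" and "\<exists>c r.
      c 0 = 0 \<and> c k = length \<pi> \<and> (\<forall>i<k. c i \<le> c (Suc i)) \<and>
      r 0 = 0 \<and> r (Suc k) = length \<pi> \<and> (\<forall>j<Suc k. r j \<le> r (Suc j)) \<and>
      (\<forall>i<k. \<forall>j<Suc k. cell_seq \<pi> c r i j = [] \<or>
      pattern_in (if j = Suc i then Inc else if j = i then Av \<sigma> else {}) (cell_seq \<pi> c r i j))"
    by (simp_all add: St_k_def Grid_def)
  then obtain c r where g:
      "c 0 = 0" "c k = length \<pi>" "\<forall>i<k. c i \<le> c (Suc i)"
      "r 0 = 0" "r (Suc k) = length \<pi>" "\<forall>j<Suc k. r j \<le> r (Suc j)"
      "\<forall>i<k. \<forall>j<Suc k. cell_seq \<pi> c r i j = [] \<or>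
      pattern_in (if j = Suc i then Inc else if j = i then Av \<sigma> else {}) (cell_seq \<pi> c r i j)"
    by blast
  have sp: "is_perm \<sigma>" using assms by (simp add: sum_indecomposable_def)
  have "\<not> contains \<pi> (skew_sum [0] \<sigma>)"
  proof
    assume "contains \<pi> (skew_sum [0] \<sigma>)"
    then obtain idx where idx: "sorted_wrt (<) idx" "length idx = Suc (length \<sigma>)"
      "\<forall>x\<in>set idx. x < length \<pi>"
      "order_iso (map (\<lambda>x. \<pi>!x) idx) (length \<sigma> # \<sigma>)"
      unfolding contains_def by (auto simp: skew_sum_def)
    then obtain x0 ys where xs: "idx = x0 # ys" by (cases idx) auto
    have ysl: "length ys = length \<sigma>" using idx(2) xs by simp
    have yss: "sorted_wrt (<) ys" and x0y: "\<forall>y\<in>set ys. x0 < y" using idx(1) xs by auto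
    have x0: "x0 < length \<pi>" and yl: "\<forall>y\<in>set ys. y < length \<pi>" using idx(3) xs by auto
    have O: "((\<pi>!x0 # map (\<lambda>x. \<pi>!x) ys)!a < (\<pi>!x0 # map (\<lambda>x. \<pi>!x) ys)!b) =
             ((length \<sigma> # \<sigma>)!a < (length \<sigma> # \<sigma>)!b)" if "a < Suc (length ys)" "b < Suc (length ys)" for a b
      using idx(4) xs that unfolding order_iso_def by simp
    have iso: "order_iso (map (\<lambda>y. \<pi>!y) ys) \<sigma>"
      unfolding order_iso_def
    proof (intro conjI allI impI)
      show "length (map (\<lambda>y. \<pi>!y) ys) = length \<sigma>" using ysl by simp
    next
      fix a b assume "a < length (map (\<lambda>y. \<pi>!y) ys)" "b < length (map (\<lambda>y. \<pi>!y) ys)"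
      then show "(map (\<lambda>y. \<pi>!y) ys ! a < map (\<lambda>y. \<pi>!y) ys ! b) = (\<sigma>!a < \<sigma>!b)"
        using O[of "Suc a" "Suc b"] by simp
    qed
    have below: "\<pi>!y < \<pi>!x0" if y: "y \<in> set ys" for y
    proof -
      obtain a where a: "a < length ys" "ys!a = y" using y by (metis in_set_conv_nth)
      have "\<sigma>!a \<in> set \<sigma>" using a ysl by simp
      then have "\<sigma>!a < length \<sigma>" using sp by (simp add: is_perm_def)
      then show ?thesis using O[of "Suc a" 0] a by simp
    qed
    show False
      by (rule core[OF perm g assms x0 yss ysl _ iso]) (use x0y yl below in blast)
  qed
  then show "\<pi> \<in> Av (skew_sum [0] \<sigma>)" using perm by (simp add: Av_def)
qed

end
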